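(* Let $A\in\mathbb{R}^{d\times d}$, $B\in\mathbb{R}^{d\times d_u}$, and suppose the controllability matrix $\mathcal{G}=[B\ AB\ \cdots\ A^dB]$ has rank $s_c<d$. Let $T$ be an invertible matrix such that $$TAT^{-1}=\begin{bmatrix}A_1&X_{12}\\0&X_2\end{bmatrix},\qquad TB=\begin{bmatrix}B_1\\0\end{bmatrix},$$ with $A_1\in\mathbb{R}^{s_c\times s_c}$, $X_{12}\in\mathbb{R}^{s_c\times(d-s_c)}$, $X_2\in\mathbb{R}^{(d-s_c)\times(d-s_c)}$, and define the relevant disturbances matrix $\mathcal{RD}=[X_{12}^\top\ \ X_2^\top X_{12}^\top\ \cdots\ (X_2^\top)^{d-s_c}X_{12}^\top]$. If $\mathrm{rank}(\mathcal{RD})=s_e$, then $L=(A,B,I_d)$ is equivalent to a PC-LQ: there is an invertible matrix $S$ such that $$SAS^{-1}=\begin{bmatrix}A_1&A_{12}&0\\0&A_2&0\\0&A_{32}&A_3\end{bmatrix},\qquad SB=\begin{bmatrix}B_1\\0\\0\end{bmatrix},$$ with $A_1\in\mathbb{R}^{s_c\times s_c}$ and $A_2\in\mathbb{R}^{s_e\times s_e}$.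
   Context: Such a transformation $T$ always exists when $\mathrm{rank}(\mathcal G)=s_c$. The paper phrases the conclusion as "$L$ is rotationally equivalent to" the three-block (PC-LQ) form; equivalence here means a change of state coordinates $x\mapsto Sx$. *)

theory Defs
  imports "Jordan_Normal_Form.DL_Rank"
begin

definition mat_rank :: "real mat \<Rightarrow> nat" where
  "mat_rank M = vec_space.rank (dim_row M) M"

text \<open>Block Krylov matrix [N, M N, M^2 N, ..., M^k N] (k+1 column blocks).\<close>
definition block_krylov :: "real mat \<Rightarrow> real mat \<Rightarrow> nat \<Rightarrow> real mat" where
  "block_krylov M N k =
     mat (dim_row N) (dim_col N * (k + 1))
       (\<lambda>(i, j). ((M ^\<^sub>m (j div dim_col N)) * N) $$ (i, j mod dim_col N))"

text \<open>3x3 block matrix; row sizes taken from the first block column,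
  column sizes from the first block row.\<close>
definition block3_mat ::
  "real mat \<Rightarrow> real mat \<Rightarrow> real mat \<Rightarrow> real mat \<Rightarrow> real mat \<Rightarrow> real mat \<Rightarrow>
   real mat \<Rightarrow> real mat \<Rightarrow> real mat \<Rightarrow> real mat" where
  "block3_mat M11 M12 M13 M21 M22 M23 M31 M32 M33 =
     (let r1 = dim_row M11; r2 = dim_row M21; r3 = dim_row M31;
          c1 = dim_col M11; c2 = dim_col M12; c3 = dim_col M13
      in mat (r1 + r2 + r3) (c1 + c2 + c3) (\<lambda>(i, j).
        if i < r1 then
          (if j < c1 then M11 $$ (i, j) else if j < c1 + c2 then M12 $$ (i, j - c1)
           else M13 $$ (i, j - c1 - c2))
        else if i < r1 + r2 then
          (if j < c1 then M21 $$ (i - r1, j) else if j < c1 + c2 then M22 $$ (i - r1, j - c1)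
           else M23 $$ (i - r1, j - c1 - c2))
        else
          (if j < c1 then M31 $$ (i - r1 - r2, j) else if j < c1 + c2 then M32 $$ (i - r1 - r2, j - c1)
           else M33 $$ (i - r1 - r2, j - c1 - c2))))"

end

theory Submission imports Defs begin

lemma pow_mat_Suc_left:
  fixes M :: "'a::semiring_1 mat"
  assumes M: "M \<in> carrier_mat n n"
  shows "M ^\<^sub>m Suc k = M * M ^\<^sub>m k"
proof (induction k)
  case 0 then show ?case using M by simp
next
  case (Suc k)
  have "M ^\<^sub>m Suc (Suc k) = (M * M ^\<^sub>m k) * M" using Suc by simp
  also have "\<dots> = M * (M ^\<^sub>m k * M)" using M by (simp add: assoc_mult_mat[of _ n n _ n _ n])
  finally show ?case by simp
qed

context vec_space
begin

lemma mult_span: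
  assumes M: "M \<in> carrier_mat n n" and S: "S \<subseteq> carrier_vec n" and T: "T \<subseteq> carrier_vec n"
    and img: "\<And>s. s \<in> S \<Longrightarrow> M *\<^sub>v s \<in> span T" and x: "x \<in> span S"
  shows "M *\<^sub>v x \<in> span T"
proof -
  from in_spanE[OF x] obtain a A where xa: "x = lincomb a A" and fA: "finite A" and AS: "A \<subseteq> S" by blast
  have "A \<subseteq> S \<Longrightarrow> M *\<^sub>v lincomb a A \<in> span T" using fA
  proof (induction A rule: finite_induct)
    case empty
    have "M *\<^sub>v 0\<^sub>v n = 0\<^sub>v n" using M by (intro eq_vecI) auto
    then show ?case using in_spanI[of "0\<^sub>v n" _ "{}" T] by simp
  next
    case (insert v F)
    have v: "v \<in> carrier_vec n" using insert S by auto
    have F: "F \<subseteq> carrier_vec n" using insert S by auto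
    have "lincomb a (F \<union> {v}) = a v \<cdot>\<^sub>v v + lincomb a F"
      using lincomb_insert[OF insert(1) F _ insert(2) v] by simp
    hence eq: "lincomb a (insert v F) = a v \<cdot>\<^sub>v v + lincomb a F" by simp
    have lF: "lincomb a F \<in> carrier_vec n" using F lincomb_closed by simp
    have "M *\<^sub>v lincomb a (insert v F) = a v \<cdot>\<^sub>v (M *\<^sub>v v) + M *\<^sub>v lincomb a F"
      unfolding eq using M v lF by (simp add: mult_add_distrib_mat_vec mult_mat_vec)
    moreover have "a v \<cdot>\<^sub>v (M *\<^sub>v v) \<in> span T" using smult_in_span[OF T img] insert by auto
    moreover have "M *\<^sub>v lincomb a F \<in> span T" using insert by auto
    ultimately show ?case using span_add1[OF T] by simp
  qed
  thus ?thesis using xa AS by simp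
qed

lemma lin_indpt_empty': "lin_indpt {}"
  unfolding lin_dep_def by auto

lemma krylov_stab:
  assumes M: "M \<in> carrier_mat n n" and c: "c \<in> carrier_vec n"
  shows "(M ^\<^sub>m j) *\<^sub>v c \<in> span ((\<lambda>i. (M ^\<^sub>m i) *\<^sub>v c) ` {..n})"
proof -
  define f where "f = (\<lambda>i. (M ^\<^sub>m i) *\<^sub>v c)"
  have fc: "f i \<in> carrier_vec n" for i unfolding f_def using M c by (metis mult_mat_vec_carrier pow_carrier_mat)
  have fS: "f ` A \<subseteq> carrier_vec n" for A using fc by auto
  have fSuc: "f (Suc i) = M *\<^sub>v f i" for i
    unfolding f_def pow_mat_Suc_left[OF M] using M c
    by (intro assoc_mult_mat_vec[of _ n n _ n]) auto
  have ex: "\<exists>k\<le>n. f k \<in> span (f ` {..<k})"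
  proof (rule ccontr)
    assume H: "\<not> ?thesis"
    have ind: "k \<le> Suc n \<Longrightarrow> lin_indpt (f ` {..<k}) \<and> card (f ` {..<k}) = k" for k
    proof (induction k)
      case 0 then show ?case using lin_indpt_empty' by simp
    next
      case (Suc k)
      hence k: "k \<le> n" and IH: "lin_indpt (f ` {..<k})" "card (f ` {..<k}) = k" by auto
      have ns: "f k \<notin> span (f ` {..<k})" using H k by auto
      have nin: "f k \<notin> f ` {..<k}" using ns in_own_span[OF fS] by blast
      have eq: "f ` {..<Suc k} = f ` {..<k} \<union> {f k}" by (auto simp: lessThan_Suc)
      have "lin_indpt (f ` {..<k} \<union> {f k})"
        using lin_dep_iff_in_span[OF fS IH(1) fc nin] ns by simp
      moreover have "card (f ` {..<Suc k}) = Suc k" unfolding eq using nin IH(2) by simp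
      ultimately show ?case unfolding eq by simp
    qed
    from ind[of "Suc n"] have "lin_indpt (f ` {..<Suc n})" "card (f ` {..<Suc n}) = Suc n" by auto
    with li_le_dim(2)[OF fin_dim fS] dim_is_n show False by fastforce
  qed
  then obtain k where k: "k \<le> n" and fk: "f k \<in> span (f ` {..<k})" by blast
  let ?W = "span (f ` {..<k})"
  have "f j \<in> ?W" for j
  proof (induction j)
    case 0 show ?case
    proof (cases "k = 0")
      case True then show ?thesis using fk by simp
    next
      case False then show ?thesis using span_mem[OF fS] by auto
    qed
  next
    case (Suc j)
    show ?case
    proof (cases "Suc j \<le> k")
      case True
      show ?thesis
      proof (cases "Suc j = k")
        case True then show ?thesis using fk by simp
      next
        case False then show ?thesis using \<open>Suc j \<le> k\<close> span_mem[OF fS] by auto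
      qed
    next
      case False
      have "M *\<^sub>v f j \<in> ?W"
      proof (rule mult_span[OF M fS fS])
        fix s assume "s \<in> f ` {..<k}"
        then obtain i where i: "i < k" "s = f i" by auto
        show "M *\<^sub>v s \<in> ?W"
        proof (cases "Suc i < k")
          case True
          have "f (Suc i) \<in> ?W" using True by (intro span_mem[OF fS]) auto
          then show ?thesis using i fSuc by simp
        next
          case False then have "Suc i = k" using i by simp
          then show ?thesis using i fSuc[of i] fk by metis
        qed
      next
        show "f j \<in> ?W" using Suc.IH .
      qed
      then show ?thesis using fSuc by simp
    qed
  qed
  moreover have "?W \<subseteq> span (f ` {..n})" using k by (intro span_is_monotone) auto
  ultimately show ?thesis unfolding f_def by auto
qed

end

lemma block_krylov_carrier:
  assumes N: "N \<in> carrier_mat n m"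
  shows "block_krylov M N k \<in> carrier_mat n (m * (k + 1))"
  using N unfolding block_krylov_def by auto

lemma block_krylov_col:
  assumes M: "M \<in> carrier_mat n n" and N: "N \<in> carrier_mat n m" and j: "j < m * (k + 1)"
  shows "col (block_krylov M N k) j = (M ^\<^sub>m (j div m)) *\<^sub>v col N (j mod m)"
proof -
  have m: "m > 0" using j by (cases m) auto
  have jm: "j mod m < m" using m by simp
  show ?thesis
  proof (rule eq_vecI)
    fix i assume "i < dim_vec ((M ^\<^sub>m (j div m)) *\<^sub>v col N (j mod m))"
    hence i: "i < n" using M by simp
    have "col (block_krylov M N k) j $ i = ((M ^\<^sub>m (j div m)) * N) $$ (i, j mod m)"
      using N i j unfolding block_krylov_def by simp
    also have "\<dots> = row (M ^\<^sub>m (j div m)) i \<bullet> col N (j mod m)"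
      using M N i jm by simp
    also have "\<dots> = ((M ^\<^sub>m (j div m)) *\<^sub>v col N (j mod m)) $ i"
      using M N i by simp
    finally show "col (block_krylov M N k) j $ i = ((M ^\<^sub>m (j div m)) *\<^sub>v col N (j mod m)) $ i" .
  next
    show "dim_vec (col (block_krylov M N k) j) = dim_vec ((M ^\<^sub>m (j div m)) *\<^sub>v col N (j mod m))"
      using M N unfolding block_krylov_def by simp
  qed
qed

lemma block_krylov_col_in:
  assumes M: "M \<in> carrier_mat n n" and N: "N \<in> carrier_mat n m" and i: "i \<le> k" and r: "r < m"
  shows "(M ^\<^sub>m i) *\<^sub>v col N r \<in> set (cols (block_krylov M N k))"
proof -
  have j: "i * m + r < m * (k + 1)"
  proof -
    have "i * m + r < i * m + m" using r by simp
    also have "\<dots> = (i + 1) * m" by simp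
    also have "\<dots> \<le> (k + 1) * m" using i by (intro mult_right_mono) auto
    finally show ?thesis by (simp add: mult.commute)
  qed
  have dv: "(i * m + r) div m = i" "(i * m + r) mod m = r" using r by auto
  have "col (block_krylov M N k) (i * m + r) = (M ^\<^sub>m i) *\<^sub>v col N r"
    using block_krylov_col[OF M N j] dv by simp
  moreover have "col (block_krylov M N k) (i * m + r) \<in> set (cols (block_krylov M N k))"
    using j block_krylov_carrier[OF N, of M k] by (simp add: cols_def)
  ultimately show ?thesis by simp
qed

locale real_vs = fixes n :: nat
sublocale real_vs \<subseteq> vec_space "TYPE(real)" n .

context real_vs
begin

lemma krylov_invariant:
  assumes M: "M \<in> carrier_mat n n" and N: "N \<in> carrier_mat n m"
    and v: "v \<in> set (cols (block_krylov M N n))"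
  shows "M *\<^sub>v v \<in> span (set (cols (block_krylov M N n)))"
proof -
  let ?K = "block_krylov M N n"
  have K: "?K \<in> carrier_mat n (m * (n + 1))" by (rule block_krylov_carrier[OF N])
  from v obtain j where j: "j < m * (n + 1)" and vj: "v = col ?K j"
    using K by (auto simp: cols_def)
  have m: "m > 0" using j by (cases m) auto
  define r where "r = j mod m"
  define q where "q = j div m"
  have r: "r < m" using m r_def by simp
  have c: "col N r \<in> carrier_vec n" using N r by simp
  have v': "v = (M ^\<^sub>m q) *\<^sub>v col N r" using block_krylov_col[OF M N j] vj q_def r_def by simp
  have "M *\<^sub>v v = (M ^\<^sub>m Suc q) *\<^sub>v col N r"
    unfolding v' pow_mat_Suc_left[OF M] using M c
    by (intro assoc_mult_mat_vec[of _ n n _ n, symmetric]) auto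
  also have "\<dots> \<in> span ((\<lambda>i. (M ^\<^sub>m i) *\<^sub>v col N r) ` {..n})" by (rule krylov_stab[OF M c])
  also have "\<dots> \<subseteq> span (set (cols ?K))"
    by (intro span_is_monotone) (auto intro: block_krylov_col_in[OF M N _ r])
  finally show ?thesis .
qed


lemma maximal_span:
  assumes C: "C \<subseteq> carrier_vec n" and mx: "maximal S0 (\<lambda>T. T \<subseteq> C \<and> lin_indpt T)"
  shows "C \<subseteq> span S0"
proof
  fix s assume s: "s \<in> C"
  have S0: "S0 \<subseteq> C" "lin_indpt S0" using mx unfolding maximal_def by auto
  have S0c: "S0 \<subseteq> carrier_vec n" using S0 C by auto
  show "s \<in> span S0"
  proof (rule ccontr)
    assume ns: "s \<notin> span S0"
    have nin: "s \<notin> S0" using ns in_own_span[OF S0c] by blast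
    have "lin_indpt (S0 \<union> {s})"
      using lin_dep_iff_in_span[OF S0c S0(2) _ nin] ns s C by auto
    moreover have "S0 \<union> {s} \<subseteq> C" using S0 s by auto
    ultimately have "S0 \<union> {s} = S0" using mx unfolding maximal_def by blast
    thus False using nin by auto
  qed
qed

lemma invariant_basis:
  assumes M: "M \<in> carrier_mat n n" and K: "K \<in> carrier_mat n p"
    and inv: "\<And>v. v \<in> set (cols K) \<Longrightarrow> M *\<^sub>v v \<in> span (set (cols K))"
    and rk: "rank K = se"
  shows "\<exists>R Ri. R \<in> carrier_mat n n \<and> Ri \<in> carrier_mat n n \<and> R * Ri = 1\<^sub>m n \<and> Ri * R = 1\<^sub>m n \<and> se \<le> n \<and>
   (\<forall>i j. se \<le> i \<longrightarrow> i < n \<longrightarrow> j < se \<longrightarrow> (Ri * M * R) $$ (i,j) = 0) \<and>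
   (\<forall>w \<in> span (set (cols K)). \<forall>i. se \<le> i \<longrightarrow> i < n \<longrightarrow> (Ri *\<^sub>v w) $ i = 0)"
proof -
  let ?C = "set (cols K)"
  have C: "?C \<subseteq> carrier_vec n" using K cols_dim by blast
  obtain S0 where fS0: "finite S0" and mx0: "maximal S0 (\<lambda>T. T \<subseteq> ?C \<and> lin_indpt T)"
    using maximal_exists_superset[of ?C "\<lambda>T. T \<subseteq> ?C \<and> lin_indpt T" "{}"] lin_indpt_empty' by auto
  have S0: "S0 \<subseteq> ?C" "lin_indpt S0" using mx0 unfolding maximal_def by auto
  have S0c: "S0 \<subseteq> carrier_vec n" using S0 C by auto
  have cS0: "card S0 = se" using rank_card_indpt[OF K mx0] rk by simp
  have spanS0: "span S0 = span ?C"
  proof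
    show "span S0 \<subseteq> span ?C" using S0(1) by (rule span_is_monotone)
    show "span ?C \<subseteq> span S0" using maximal_span[OF C mx0] by (intro span_is_subset span_is_submodule S0c)
  qed
  let ?U = "S0 \<union> set (unit_vecs n)"
  have U: "?U \<subseteq> carrier_vec n" using S0c unit_vecs_carrier by auto
  obtain S1 where fS1: "finite S1" and mx1: "maximal S1 (\<lambda>T. T \<subseteq> ?U \<and> lin_indpt T)" and S01: "S0 \<subseteq> S1"
    using maximal_exists_superset[of ?U "\<lambda>T. T \<subseteq> ?U \<and> lin_indpt T" S0] S0 fS0 by auto
  have S1: "S1 \<subseteq> ?U" "lin_indpt S1" using mx1 unfolding maximal_def by auto
  have S1c: "S1 \<subseteq> carrier_vec n" using S1 U by auto
  have "carrier_vec n \<subseteq> span S1"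
  proof -
    have "set (unit_vecs n) \<subseteq> span S1" using maximal_span[OF U mx1] by auto
    hence "span (set (unit_vecs n)) \<subseteq> span S1" by (intro span_is_subset span_is_submodule S1c)
    thus ?thesis using span_unit_vecs_is_carrier by simp
  qed
  hence "span S1 = carrier_vec n" using span_is_subset2[OF S1c] by auto
  hence "basis S1" unfolding basis_def using S1 S1c by auto
  hence cS1: "card S1 = n" using dim_basis[OF fS1] dim_is_n by simp
  have sen: "se \<le> n" using card_mono[OF fS1 S01] cS0 cS1 by simp
  obtain vs0 where vs0: "set vs0 = S0" "distinct vs0" using finite_distinct_list[OF fS0] by blast
  obtain vs1 where vs1: "set vs1 = S1 - S0" "distinct vs1" using finite_distinct_list[of "S1 - S0"] fS1 by blast
  have l0: "length vs0 = se" using vs0 cS0 distinct_card by metis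
  have l1: "length vs1 = n - se" using vs1 distinct_card card_Diff_subset[OF fS0 S01] cS0 cS1 by metis
  let ?vs = "vs0 @ vs1"
  have vsc: "set ?vs \<subseteq> carrier_vec n" using vs0 vs1 S1c S01 by auto
  have lvs: "length ?vs = n" using l0 l1 sen by simp
  have dvs: "distinct ?vs" using vs0 vs1 by auto
  have svs: "set ?vs = S1" using vs0 vs1 S01 by auto
  define R where "R = mat_of_cols n ?vs"
  have R: "R \<in> carrier_mat n n" unfolding R_def using lvs mat_of_cols_carrier(1)[of n ?vs] by simp
  have cR: "cols R = ?vs" unfolding R_def using vsc by (intro cols_mat_of_cols) auto
  have "rank R = n" using lin_indpt_full_rank[OF R] cR dvs svs S1 by simp
  hence "det R \<noteq> 0" using det_rank_iff[OF R] by simp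
  from det_non_zero_imp_unit[OF R this, of n]
  obtain Ri where Ri: "Ri \<in> carrier_mat n n" and RiR: "Ri * R = 1\<^sub>m n" and RRi: "R * Ri = 1\<^sub>m n"
    unfolding Units_def by (auto simp: ring_mat_def)
  have key: "(Ri *\<^sub>v w) $ i = 0" if w: "w \<in> span S0" and i: "se \<le> i" "i < n" for w i
  proof -
    have "w \<in> span_list vs0" using w span_list_as_span[of vs0] vs0 S0c by simp
    then obtain f where wf: "w = lincomb_list f vs0" by (metis in_span_listE)
    have wm: "w = mat_of_cols n vs0 *\<^sub>v vec se f"
      unfolding wf l0[symmetric] using vs0 S0c by (intro lincomb_list_as_mat_mult) auto
    define y where "y = vec n (\<lambda>i. if i < se then f i else 0)"
    have Ry: "R *\<^sub>v y = w"
    proof (rule eq_vecI)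
      fix k assume "k < dim_vec w"
      hence k: "k < n" using wm by simp
      have "(R *\<^sub>v y) $ k = (\<Sum>j = 0..<n. R $$ (k, j) * y $ j)"
        using R k unfolding y_def by (simp add: scalar_prod_def)
      also have "\<dots> = (\<Sum>j = 0..<se. R $$ (k, j) * y $ j) + (\<Sum>j = se..<n. R $$ (k, j) * y $ j)"
        using sen by (simp add: sum.atLeastLessThan_concat)
      also have "(\<Sum>j = se..<n. R $$ (k, j) * y $ j) = 0" unfolding y_def by simp
      also have "(\<Sum>j = 0..<se. R $$ (k, j) * y $ j) = (\<Sum>j = 0..<se. vs0 ! j $ k * f j)"
        using k sen unfolding y_def R_def by (intro sum.cong) (auto simp: mat_of_cols_index lvs l0 nth_append)
      also have "\<dots> = w $ k" unfolding wm using k l0 by (simp add: scalar_prod_def mat_of_cols_index)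
      finally show "(R *\<^sub>v y) $ k = w $ k" by simp
    next
      show "dim_vec (R *\<^sub>v y) = dim_vec w" using R wm by simp
    qed
    have "Ri *\<^sub>v w = y" unfolding Ry[symmetric] using Ri R RiR
      by (simp add: assoc_mult_mat_vec[symmetric, of _ n n _ n] y_def)
    thus ?thesis using i unfolding y_def by simp
  qed
  have blk: "(Ri * M * R) $$ (i,j) = 0" if "se \<le> i" "i < n" "j < se" for i j
  proof -
    have cj: "col R j = vs0 ! j" unfolding R_def using that l0 sen vsc by (subst col_mat_of_cols) (auto simp: nth_append lvs)
    have "vs0 ! j \<in> ?C" using vs0 S0 that l0 by auto
    hence "M *\<^sub>v col R j \<in> span S0" using inv spanS0 cj by simp
    hence "(Ri *\<^sub>v (M *\<^sub>v col R j)) $ i = 0" using key that by simp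
    moreover have "(Ri * M * R) $$ (i,j) = (Ri *\<^sub>v (M *\<^sub>v col R j)) $ i"
      using that Ri M R sen by (simp add: assoc_mult_mat[of _ n n _ n _ n] mult_mat_vec_def)
    ultimately show ?thesis by simp
  qed
  show ?thesis using R Ri RRi RiR sen blk key spanS0 by blast
qed

end

theorem proposition1:
  fixes A B T Ti A1 X12 X2 B1 :: "real mat" and d du sc se :: nat
  assumes A: "A \<in> carrier_mat d d" and B: "B \<in> carrier_mat d du"
    and rank_G: "mat_rank (block_krylov A B d) = sc" and sc_lt: "sc < d"
    and T: "T \<in> carrier_mat d d" and Ti: "Ti \<in> carrier_mat d d"
    and T_inv: "T * Ti = 1\<^sub>m d" "Ti * T = 1\<^sub>m d"
    and A1: "A1 \<in> carrier_mat sc sc" and X12: "X12 \<in> carrier_mat sc (d - sc)"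
    and X2: "X2 \<in> carrier_mat (d - sc) (d - sc)" and B1: "B1 \<in> carrier_mat sc du"
    and TAT: "T * A * Ti = four_block_mat A1 X12 (0\<^sub>m (d - sc) sc) X2"
    and TB: "T * B = B1 @\<^sub>r 0\<^sub>m (d - sc) du"
    and rank_RD: "mat_rank (block_krylov (transpose_mat X2) (transpose_mat X12) (d - sc)) = se"
  shows "\<exists>S Si A12 A2 A32 A3.
     S \<in> carrier_mat d d \<and> Si \<in> carrier_mat d d \<and> S * Si = 1\<^sub>m d \<and> Si * S = 1\<^sub>m d \<and>
     A12 \<in> carrier_mat sc se \<and> A2 \<in> carrier_mat se se \<and>
     A32 \<in> carrier_mat (d - sc - se) se \<and> A3 \<in> carrier_mat (d - sc - se) (d - sc - se) \<and>
     S * A * Si = block3_mat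
        A1 A12 (0\<^sub>m sc (d - sc - se))
        (0\<^sub>m se sc) A2 (0\<^sub>m se (d - sc - se))
        (0\<^sub>m (d - sc - se) sc) A32 A3 \<and>
     S * B = B1 @\<^sub>r 0\<^sub>m se du @\<^sub>r 0\<^sub>m (d - sc - se) du"
proof -
  define n where "n = d - sc"
  have dn: "d = sc + n" using sc_lt n_def by simp
  define M where "M = transpose_mat X2"
  define N where "N = transpose_mat X12"
  define K where "K = block_krylov M N n"
  have M: "M \<in> carrier_mat n n" using X2 unfolding M_def n_def by simp
  have N: "N \<in> carrier_mat n sc" using X12 unfolding N_def n_def by simp
  have K: "K \<in> carrier_mat n (sc * (n + 1))" unfolding K_def by (rule block_krylov_carrier[OF N])
  interpret real_vs n .
  have rk: "rank K = se" using rank_RD K unfolding mat_rank_def K_def M_def N_def n_def by simp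
  have "\<exists>R Ri. R \<in> carrier_mat n n \<and> Ri \<in> carrier_mat n n \<and> R * Ri = 1\<^sub>m n \<and> Ri * R = 1\<^sub>m n \<and> se \<le> n \<and>
   (\<forall>i j. se \<le> i \<longrightarrow> i < n \<longrightarrow> j < se \<longrightarrow> (Ri * M * R) $$ (i,j) = 0) \<and>
   (\<forall>w \<in> span (set (cols K)). \<forall>i. se \<le> i \<longrightarrow> i < n \<longrightarrow> (Ri *\<^sub>v w) $ i = 0)"
    by (rule invariant_basis[OF M K krylov_invariant[OF M N, folded K_def] rk])
  then obtain R Ri where R: "R \<in> carrier_mat n n" and Ri: "Ri \<in> carrier_mat n n"
    and RRi: "R * Ri = 1\<^sub>m n" and RiR: "Ri * R = 1\<^sub>m n" and sen: "se \<le> n"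
    and blk': "\<forall>i j. se \<le> i \<longrightarrow> i < n \<longrightarrow> j < se \<longrightarrow> (Ri * M * R) $$ (i,j) = 0"
    and key': "\<forall>w \<in> span (set (cols K)). \<forall>i. se \<le> i \<longrightarrow> i < n \<longrightarrow> (Ri *\<^sub>v w) $ i = 0"
    by (elim exE conjE)
  have blk: "\<And>i j. se \<le> i \<Longrightarrow> i < n \<Longrightarrow> j < se \<Longrightarrow> (Ri * M * R) $$ (i,j) = 0" using blk' by blast
  have key: "\<And>w i. w \<in> span (set (cols K)) \<Longrightarrow> se \<le> i \<Longrightarrow> i < n \<Longrightarrow> (Ri *\<^sub>v w) $ i = 0" using key' by blast
  define P where "P = transpose_mat R"
  define Pi where "Pi = transpose_mat Ri"
  have P: "P \<in> carrier_mat n n" and Pi: "Pi \<in> carrier_mat n n" using R Ri unfolding P_def Pi_def by auto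
  have PPi: "P * Pi = 1\<^sub>m n"
  proof -
    have "P * Pi = transpose_mat (Ri * R)" unfolding P_def Pi_def using transpose_mult[OF Ri R] by simp
    thus ?thesis using RiR by simp
  qed
  have PiP: "Pi * P = 1\<^sub>m n"
  proof -
    have "Pi * P = transpose_mat (R * Ri)" unfolding P_def Pi_def using transpose_mult[OF R Ri] by simp
    thus ?thesis using RRi by simp
  qed
  define G where "G = P * X2 * Pi"
  define H where "H = X12 * Pi"
  have X2': "X2 \<in> carrier_mat n n" and X12': "X12 \<in> carrier_mat sc n" using X2 X12 n_def by auto
  have G: "G \<in> carrier_mat n n" unfolding G_def using P Pi X2' by auto
  have H: "H \<in> carrier_mat sc n" unfolding H_def using Pi X12' by auto
  have RiM: "Ri * M \<in> carrier_mat n n" using Ri M by simp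
  have Gt: "G = transpose_mat (Ri * M * R)"
  proof -
    have "transpose_mat (Ri * M * R) = P * transpose_mat (Ri * M)"
      unfolding P_def by (rule transpose_mult[OF RiM R])
    also have "transpose_mat (Ri * M) = X2 * Pi"
      unfolding Pi_def M_def using transpose_mult[OF Ri M] unfolding M_def by simp
    also have "P * (X2 * Pi) = G" unfolding G_def using P X2' Pi by (simp add: assoc_mult_mat[of _ n n _ n _ n])
    finally show ?thesis by simp
  qed
  have Ht: "H = transpose_mat (Ri * N)"
    unfolding H_def Pi_def N_def using transpose_mult[OF Ri N] unfolding N_def by simp
  have G0: "G $$ (j, i) = 0" if "j < se" "se \<le> i" "i < n" for i j
  proof -
    have "G $$ (j, i) = (Ri * M * R) $$ (i, j)" unfolding Gt using that sen R RiM
      by (intro index_transpose_mat(1)) auto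
    thus ?thesis using blk[of i j] that by simp
  qed
  have H0: "H $$ (j, i) = 0" if "j < sc" "se \<le> i" "i < n" for i j
  proof -
    have "col N j = (M ^\<^sub>m 0) *\<^sub>v col N j" using N M that by simp
    also have "\<dots> \<in> set (cols K)" unfolding K_def by (rule block_krylov_col_in[OF M N _ \<open>j < sc\<close>]) simp
    finally have cK: "col N j \<in> set (cols K)" .
    have "set (cols K) \<subseteq> carrier_vec n" using K cols_dim by blast
    from span_mem[OF this cK] have "col N j \<in> span (set (cols K))" .
    hence "(Ri *\<^sub>v col N j) $ i = 0" using key[OF _ that(2,3)] by simp
    moreover have "H $$ (j, i) = (Ri * N) $$ (i, j)" unfolding Ht using that Ri N
      by (intro index_transpose_mat(1)) auto
    moreover have "(Ri * N) $$ (i, j) = (Ri *\<^sub>v col N j) $ i" using that Ri N by simp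
    ultimately show ?thesis by simp
  qed
  define D where "D = four_block_mat (1\<^sub>m sc) (0\<^sub>m sc n) (0\<^sub>m n sc) P"
  define Di where "Di = four_block_mat (1\<^sub>m sc) (0\<^sub>m sc n) (0\<^sub>m n sc) Pi"
  have D: "D \<in> carrier_mat d d" unfolding D_def dn using P by simp
  have Di: "Di \<in> carrier_mat d d" unfolding Di_def dn using Pi by simp
  have DDi: "D * Di = 1\<^sub>m d"
    unfolding D_def Di_def dn
    by (subst mult_four_block_mat[of _ sc sc _ n _ n _ _ sc _ n], insert P Pi PPi, auto)
  have DiD: "Di * D = 1\<^sub>m d"
    unfolding D_def Di_def dn
    by (subst mult_four_block_mat[of _ sc sc _ n _ n _ _ sc _ n], insert P Pi PiP, auto)
  define S where "S = D * T"
  define Si where "Si = Ti * Di"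
  have S: "S \<in> carrier_mat d d" unfolding S_def using D T by simp
  have Si: "Si \<in> carrier_mat d d" unfolding Si_def using Di Ti by simp
  have SSi: "S * Si = 1\<^sub>m d"
  proof -
    have "S * Si = D * (T * Ti) * Di" unfolding S_def Si_def using D T Ti Di
      by (simp add: assoc_mult_mat[of _ d d _ d _ d])
    thus ?thesis using T_inv D Di DDi by simp
  qed
  have SiS: "Si * S = 1\<^sub>m d"
  proof -
    have "Si * S = Ti * (Di * D) * T" unfolding S_def Si_def using D T Ti Di
      by (simp add: assoc_mult_mat[of _ d d _ d _ d])
    thus ?thesis using T_inv T Ti DiD by simp
  qed
  have SASi: "S * A * Si = four_block_mat A1 H (0\<^sub>m n sc) G"
  proof -
    have "S * A * Si = D * (T * A * Ti) * Di" unfolding S_def Si_def using D T Ti Di A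
      by (simp add: assoc_mult_mat[of _ d d _ d _ d])
    also have "\<dots> = D * four_block_mat A1 X12 (0\<^sub>m n sc) X2 * Di" using TAT n_def by simp
    also have "D * four_block_mat A1 X12 (0\<^sub>m n sc) X2 = four_block_mat A1 X12 (0\<^sub>m n sc) (P * X2)"
      unfolding D_def
      by (subst mult_four_block_mat[of _ sc sc _ n _ n _ _ sc _ n], insert P A1 X12' X2', auto)
    also have "\<dots> * Di = four_block_mat A1 H (0\<^sub>m n sc) G"
      unfolding Di_def G_def H_def
      by (subst mult_four_block_mat[of _ sc sc _ n _ n _ _ sc _ n], insert P Pi A1 X12' X2', auto)
    finally show ?thesis .
  qed
  have SB: "S * B = B1 @\<^sub>r 0\<^sub>m n du"
  proof -
    have "S * B = D * (T * B)" unfolding S_def using D T B by (simp add: assoc_mult_mat[of _ d d _ d _ du])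
    also have "\<dots> = D * (B1 @\<^sub>r 0\<^sub>m n du)" using TB n_def by simp
    also have "\<dots> = B1 @\<^sub>r 0\<^sub>m n du"
      unfolding D_def append_rows_def
      by (subst mult_four_block_mat[of _ sc sc _ n _ n _ _ du _ 0], insert P B1, auto)
    finally show ?thesis .
  qed
  define A12 where "A12 = mat sc se (\<lambda>(i,j). H $$ (i,j))"
  define A2 where "A2 = mat se se (\<lambda>(i,j). G $$ (i,j))"
  define A32 where "A32 = mat (n - se) se (\<lambda>(i,j). G $$ (i + se,j))"
  define A3 where "A3 = mat (n - se) (n - se) (\<lambda>(i,j). G $$ (i + se,j + se))"
  have dse: "d - sc - se = n - se" using n_def by simp
  have E1: "four_block_mat A1 H (0\<^sub>m n sc) G = block3_mat
        A1 A12 (0\<^sub>m sc (d - sc - se))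
        (0\<^sub>m se sc) A2 (0\<^sub>m se (d - sc - se))
        (0\<^sub>m (d - sc - se) sc) A32 A3"
    unfolding dse
  proof (rule eq_matI)
    fix i j assume i: "i < dim_row (block3_mat A1 A12 (0\<^sub>m sc (n - se)) (0\<^sub>m se sc) A2 (0\<^sub>m se (n - se))
          (0\<^sub>m (n - se) sc) A32 A3)"
      and j: "j < dim_col (block3_mat A1 A12 (0\<^sub>m sc (n - se)) (0\<^sub>m se sc) A2 (0\<^sub>m se (n - se))
          (0\<^sub>m (n - se) sc) A32 A3)"
    have i': "i < sc + n" and j': "j < sc + n" using i j A1 sen unfolding block3_mat_def A12_def Let_def by auto
    show "four_block_mat A1 H (0\<^sub>m n sc) G $$ (i, j) = block3_mat A1 A12 (0\<^sub>m sc (n - se)) (0\<^sub>m se sc) A2 (0\<^sub>m se (n - se))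
          (0\<^sub>m (n - se) sc) A32 A3 $$ (i, j)"
      using i' j' A1 H G sen G0[of "i - sc" "j - sc"] H0[of i "j - sc"]
      unfolding block3_mat_def Let_def A12_def A2_def A32_def A3_def by auto
  next
    show "dim_row (four_block_mat A1 H (0\<^sub>m n sc) G) = dim_row (block3_mat A1 A12 (0\<^sub>m sc (n - se)) (0\<^sub>m se sc) A2 (0\<^sub>m se (n - se))
          (0\<^sub>m (n - se) sc) A32 A3)"
      using A1 G sen unfolding block3_mat_def Let_def A12_def by auto
    show "dim_col (four_block_mat A1 H (0\<^sub>m n sc) G) = dim_col (block3_mat A1 A12 (0\<^sub>m sc (n - se)) (0\<^sub>m se sc) A2 (0\<^sub>m se (n - se))
          (0\<^sub>m (n - se) sc) A32 A3)"
      using A1 G sen unfolding block3_mat_def Let_def A12_def by auto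
  qed
  have E2: "B1 @\<^sub>r 0\<^sub>m n du = B1 @\<^sub>r 0\<^sub>m se du @\<^sub>r 0\<^sub>m (d - sc - se) du"
    unfolding dse append_rows_def using B1 sen by (intro eq_matI) auto
  show ?thesis
    apply (rule exI[of _ S], rule exI[of _ Si], rule exI[of _ A12], rule exI[of _ A2],
        rule exI[of _ A32], rule exI[of _ A3])
    using S Si SSi SiS SASi SB E1 E2 dse unfolding A12_def A2_def A32_def A3_def by simp
qed

end
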